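(* For all $m,n\in\mathbb{N}$ and every $\xi\in\mathbb{C}^{\Lambda^{\le}(m,n)}$, \[ \pi_2\big(M_\xi\colon\mathcal{P}_{\le m}(\mathbb{T}^n)\to\ell_{\frac{2m}{m+1}}(\Lambda^{\le}(m,n))\big)\le|\Lambda^{\le}(m,n)|^{\frac1{2m}}\|\xi\|_\infty . \] Moreover, for $\xi=\mathbf 1=(1,\dots,1)$, \[ \sqrt{1+\tfrac{n-1}{m}}\le\pi_2\big(M_{\mathbf 1}\colon\mathcal{P}_{\le m}(\mathbb{T}^n)\to\ell_{\frac{2m}{m+1}}(\Lambda^{\le}(m,n))\big)=|\Lambda^{\le}(m,n)|^{\frac1{2m}}\le2\sqrt{2e}\,\sqrt{1+\tfrac{n-1}{m}}. \]
   Context: $\Lambda^{\le}(m,n)=\{\alpha\in\mathbb{N}_0^n:\sum_j\alpha_j\le m\}$ and $|\Lambda^{\le}(m,n)|$ its cardinality. $\mathcal{P}_{\le m}(\mathbb{T}^n)$ is the space of analytic trigonometric polynomials $\sum_{\alpha\in\Lambda^{\le}(m,n)}c_\alpha z^\alpha$ on $\mathbb{T}^n$ with sup norm; $M_\xi P=(\xi_\alpha\widehat P(\alpha))_\alpha$. $\pi_2$ is the absolutely 2-summing norm. *)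

theory Defs
  imports "HOL-Analysis.Analysis"
begin

text \<open>Multi-indices: alpha in N_0^n represented as nat => nat vanishing at j >= n.\<close>
definition multi_idx :: "nat \<Rightarrow> nat \<Rightarrow> (nat \<Rightarrow> nat) set" where
  "multi_idx m n = {\<alpha>. (\<forall>j\<ge>n. \<alpha> j = 0) \<and> (\<Sum>j<n. \<alpha> j) \<le> m}"

text \<open>Analytic trig. polynomials of degree at most m on T^n, given by their coefficients.\<close>
definition polys :: "nat \<Rightarrow> nat \<Rightarrow> ((nat \<Rightarrow> nat) \<Rightarrow> complex) set" where
  "polys m n = {c. \<forall>\<alpha>. \<alpha> \<notin> multi_idx m n \<longrightarrow> c \<alpha> = 0}"

definition torus :: "nat \<Rightarrow> (nat \<Rightarrow> complex) set" where
  "torus n = {z. \<forall>j<n. cmod (z j) = 1}"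

definition poly_eval :: "nat \<Rightarrow> nat \<Rightarrow> ((nat \<Rightarrow> nat) \<Rightarrow> complex) \<Rightarrow> (nat \<Rightarrow> complex) \<Rightarrow> complex" where
  "poly_eval m n c z = (\<Sum>\<alpha>\<in>multi_idx m n. c \<alpha> * (\<Prod>j<n. z j ^ \<alpha> j))"

definition poly_norm :: "nat \<Rightarrow> nat \<Rightarrow> ((nat \<Rightarrow> nat) \<Rightarrow> complex) \<Rightarrow> real" where
  "poly_norm m n c = (SUP z\<in>torus n. cmod (poly_eval m n c z))"

definition lp_norm :: "real \<Rightarrow> 'i set \<Rightarrow> ('i \<Rightarrow> complex) \<Rightarrow> real" where
  "lp_norm p I x = (\<Sum>i\<in>I. cmod (x i) powr p) powr (1 / p)"

definition linf_norm :: "'i set \<Rightarrow> ('i \<Rightarrow> complex) \<Rightarrow> real" where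
  "linf_norm I x = (SUP i\<in>I. cmod (x i))"

definition mult_op :: "((nat \<Rightarrow> nat) \<Rightarrow> complex) \<Rightarrow> ((nat \<Rightarrow> nat) \<Rightarrow> complex) \<Rightarrow> ((nat \<Rightarrow> nat) \<Rightarrow> complex)" where
  "mult_op \<xi> c = (\<lambda>\<alpha>. \<xi> \<alpha> * c \<alpha>)"

definition dual_ball :: "nat \<Rightarrow> nat \<Rightarrow> (((nat \<Rightarrow> nat) \<Rightarrow> complex) \<Rightarrow> complex) set" where
  "dual_ball m n = {\<phi>.
     (\<forall>c\<in>polys m n. \<forall>d\<in>polys m n. \<forall>a b::complex.
        \<phi> (\<lambda>\<alpha>. a * c \<alpha> + b * d \<alpha>) = a * \<phi> c + b * \<phi> d) \<and>
     (\<forall>c\<in>polys m n. cmod (\<phi> c) \<le> poly_norm m n c)}"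

definition weak_l2 :: "nat \<Rightarrow> nat \<Rightarrow> ((nat \<Rightarrow> nat) \<Rightarrow> complex) list \<Rightarrow> real" where
  "weak_l2 m n xs = (SUP \<phi>\<in>dual_ball m n. sqrt (\<Sum>x\<leftarrow>xs. (cmod (\<phi> x))\<^sup>2))"

definition pi2 :: "nat \<Rightarrow> nat \<Rightarrow> (((nat \<Rightarrow> nat) \<Rightarrow> complex) \<Rightarrow> 'b) \<Rightarrow> ('b \<Rightarrow> real) \<Rightarrow> real" where
  "pi2 m n T NY = Inf {C. C \<ge> 0 \<and> (\<forall>xs. set xs \<subseteq> polys m n \<longrightarrow>
        sqrt (\<Sum>x\<leftarrow>xs. (NY (T x))\<^sup>2) \<le> C * weak_l2 m n xs)}"

end

theory Submission
  imports Defs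
begin

section \<open>Cardinality of multi-indices\<close>

lemma multi_idx_0: "multi_idx m 0 = {\<lambda>_. 0}"
  unfolding multi_idx_def by auto

lemma multi_idx_Suc:
  "multi_idx m (Suc n) = (\<Union>k\<in>{..m}. (\<lambda>\<alpha>. \<alpha>(n:=k)) ` multi_idx (m-k) n)"
proof (intro equalityI subsetI)
  fix \<alpha> assume a: "\<alpha> \<in> multi_idx m (Suc n)"
  hence z: "\<forall>j\<ge>Suc n. \<alpha> j = 0" and s: "(\<Sum>j<Suc n. \<alpha> j) \<le> m"
    unfolding multi_idx_def by auto
  have s2: "(\<Sum>j<n. \<alpha> j) + \<alpha> n \<le> m" using s by simp
  have e: "(\<Sum>j<n. (\<alpha>(n:=0)) j) = (\<Sum>j<n. \<alpha> j)" by (rule sum.cong) auto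
  have "\<alpha>(n:=0) \<in> multi_idx (m - \<alpha> n) n"
    unfolding multi_idx_def using z s2 e by auto
  moreover have "\<alpha> = (\<alpha>(n:=0))(n := \<alpha> n)" by simp
  moreover have "\<alpha> n \<le> m" using s2 by simp
  ultimately show "\<alpha> \<in> (\<Union>k\<in>{..m}. (\<lambda>\<alpha>. \<alpha>(n:=k)) ` multi_idx (m-k) n)" by blast
next
  fix \<beta> assume "\<beta> \<in> (\<Union>k\<in>{..m}. (\<lambda>\<alpha>. \<alpha>(n:=k)) ` multi_idx (m-k) n)"
  then obtain k \<alpha> where k: "k \<le> m" and a: "\<alpha> \<in> multi_idx (m-k) n" and b: "\<beta> = \<alpha>(n:=k)" by auto
  have e: "(\<Sum>j<n. (\<alpha>(n:=k)) j) = (\<Sum>j<n. \<alpha> j)" by (rule sum.cong) auto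
  show "\<beta> \<in> multi_idx m (Suc n)"
    using a k e unfolding b multi_idx_def by auto
qed

lemma multi_idx_finite_card:
  "finite (multi_idx m n) \<and> card (multi_idx m n) = (n + m) choose m"
proof (induction n arbitrary: m)
  case 0
  then show ?case by (simp add: multi_idx_0)
next
  case (Suc n)
  define F where "F k = (\<lambda>\<alpha>::nat\<Rightarrow>nat. \<alpha>(n:=k)) ` multi_idx (m-k) n" for k
  have inj: "inj_on (\<lambda>\<alpha>::nat\<Rightarrow>nat. \<alpha>(n:=k)) (multi_idx (m-k) n)" for k
  proof (rule inj_onI)
    fix \<alpha> \<beta> assume "\<alpha> \<in> multi_idx (m-k) n" "\<beta> \<in> multi_idx (m-k) n" "\<alpha>(n:=k) = \<beta>(n:=k)"
    then have h: "\<alpha> n = 0" "\<beta> n = 0" "\<alpha>(n:=k) = \<beta>(n:=k)" unfolding multi_idx_def by auto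
    show "\<alpha> = \<beta>"
    proof
      fix j show "\<alpha> j = \<beta> j" using fun_cong[OF h(3), of j] h(1,2) by (cases "j = n") auto
    qed
  qed
  have fin: "finite (F k)" for k using Suc.IH[of "m-k"] unfolding F_def by auto
  have cardF: "card (F k) = (n + (m-k)) choose (m-k)" for k
    unfolding F_def using card_image[OF inj[of k]] Suc.IH[of "m-k"] by simp
  have disj: "\<forall>i\<in>{..m}. \<forall>j\<in>{..m}. i \<noteq> j \<longrightarrow> F i \<inter> F j = {}"
  proof (intro ballI impI)
    fix i j :: nat assume "i \<noteq> j"
    show "F i \<inter> F j = {}"
    proof (rule ccontr)
      assume "F i \<inter> F j \<noteq> {}"
      then obtain a b where "a(n:=i) = b(n:=j)" unfolding F_def by blast
      from fun_cong[OF this, of n] \<open>i \<noteq> j\<close> show False by simp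
    qed
  qed
  have eq: "multi_idx m (Suc n) = (\<Union>k\<in>{..m}. F k)" unfolding F_def by (rule multi_idx_Suc)
  have "card (multi_idx m (Suc n)) = (\<Sum>k\<le>m. card (F k))"
    unfolding eq by (rule card_UN_disjoint) (use fin disj in auto)
  also have "\<dots> = (\<Sum>k\<le>m. (n + (m-k)) choose (m-k))" by (simp add: cardF)
  also have "\<dots> = (\<Sum>k\<le>m. (n + k) choose k)"
  proof -
    have "(\<Sum>k<Suc m. (\<lambda>k. (n + k) choose k) (Suc m - Suc k)) = (\<Sum>k<Suc m. (n + k) choose k)"
      by (rule sum.nat_diff_reindex)
    thus ?thesis by (simp add: lessThan_Suc_atMost)
  qed
  also have "\<dots> = (Suc n + m) choose m" by (simp add: sum_choose_lower)
  finally show ?case using eq fin by auto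
qed

lemma finite_multi_idx: "finite (multi_idx m n)"
  using multi_idx_finite_card by blast

lemma card_multi_idx: "card (multi_idx m n) = (n + m) choose m"
  using multi_idx_finite_card by blast

lemma zero_in_multi_idx: "(\<lambda>_. 0) \<in> multi_idx m n"
  unfolding multi_idx_def by auto


section \<open>Numerical bounds\<close>

lemma pow_fact_le_exp:
  fixes x :: real assumes "x \<ge> 0"
  shows "x ^ k / fact k \<le> exp x"
proof -
  have s: "summable (\<lambda>n. x^n /\<^sub>R fact n)" using exp_converges by (rule sums_summable)
  have "(\<Sum>n\<in>{k}. x^n /\<^sub>R fact n) \<le> (\<Sum>n. x^n /\<^sub>R fact n)"
    by (rule sum_le_suminf[OF s]) (use assms in auto)
  moreover have "exp x = (\<Sum>n. x^n /\<^sub>R fact n)" by (rule sums_unique[OF exp_converges])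
  ultimately show ?thesis by (simp add: divide_inverse_commute)
qed

lemma binom_upper:
  assumes "m \<ge> 1"
  shows "real ((n + m) choose m) \<le> (exp 1 * real (n + m) / real m) ^ m"
proof -
  have h: "fact m * fact (n + m - m) * ((n+m) choose m) = (fact (n+m) :: nat)"
    by (rule binomial_fact_lemma) simp
  hence "fact (n+m) = fact m * fact n * ((n+m) choose m)" by simp
  also have "\<dots> = fact n * (((n+m) choose m) * fact m)" by (simp add: mult.commute mult.left_commute)
  finally have "fact (n+m) = fact n * (((n+m) choose m) * fact m)" .
  hence "((n+m) choose m) * fact m = fact (n+m) div fact (n+m-m)" by simp
  also have "\<dots> \<le> (n+m)^m" by (rule fact_div_fact_le_pow) simp
  finally have "real (((n+m) choose m) * fact m) \<le> real ((n+m)^m)" by (simp only: of_nat_le_iff)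
  hence a: "real ((n+m) choose m) * fact m \<le> real (n+m) ^ m" by simp
  have b: "real m ^ m \<le> exp (real m) * fact m"
    using pow_fact_le_exp[of "real m" m] by (simp add: divide_le_eq)
  have fm: "(fact m :: real) > 0" by simp
  have mpos: "real m > 0" using assms by simp
  have "real ((n + m) choose m) * real m ^ m \<le> real ((n + m) choose m) * (exp (real m) * fact m)"
    by (intro mult_left_mono b) simp
  also have "\<dots> = exp (real m) * (real ((n+m) choose m) * fact m)" by simp
  also have "\<dots> \<le> exp (real m) * real (n+m) ^ m" by (intro mult_left_mono a) simp
  finally have c: "real ((n + m) choose m) * real m ^ m \<le> exp (real m) * real (n+m) ^ m" .
  have "exp (real m) = exp 1 ^ m" by (simp add: exp_of_nat_mult[symmetric])
  hence "(exp 1 * real (n + m) / real m) ^ m = exp (real m) * real (n+m)^m / real m ^ m"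
    by (simp add: power_divide power_mult_distrib)
  thus ?thesis using c mpos by (simp add: le_divide_eq)
qed

lemma numeric_bounds:
  fixes m n :: nat
  assumes "m \<ge> 1" "n \<ge> 1"
  defines "N \<equiv> real ((n + m) choose m)"
  shows "sqrt (1 + (real n - 1) / real m) \<le> N powr (1 / (2 * real m))"
    "N powr (1 / (2 * real m)) \<le> 2 * sqrt (2 * exp 1) * sqrt (1 + (real n - 1) / real m)"
proof -
  define x where "x = 1 + (real n - 1) / real m"
  have mpos: "real m > 0" using assms by simp
  have x1: "x \<ge> 1" unfolding x_def using assms by simp
  have Npos: "N > 0" unfolding N_def by simp
  have rt: "N powr (1 / (2 * real m)) = sqrt (N powr (1 / real m))"
  proof -
    have "sqrt (N powr (1/real m)) = (N powr (1/real m)) powr (1/2)" by (simp add: powr_half_sqrt)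
    also have "\<dots> = N powr (1/(2*real m))" by (simp add: powr_powr mult.commute)
    finally show ?thesis by simp
  qed
  have xle: "x \<le> real (n+m) / real m" unfolding x_def using mpos by (simp add: field_simps)
  have "x ^ m \<le> (real (n+m) / real m) ^ m" using xle x1 by (intro power_mono) auto
  also have "\<dots> \<le> N" unfolding N_def by (rule binomial_ge_n_over_k_pow_k) simp
  finally have "x ^ m \<le> N" .
  hence "(x ^ m) powr (1 / real m) \<le> N powr (1 / real m)"
    using x1 by (intro powr_mono2) auto
  moreover have "(x ^ m) powr (1 / real m) = x"
    using x1 mpos by (simp add: powr_realpow[symmetric] powr_powr)
  ultimately have "x \<le> N powr (1 / real m)" by simp
  thus "sqrt (1 + (real n - 1) / real m) \<le> N powr (1 / (2 * real m))"
    unfolding rt x_def[symmetric] by simp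
  have "N \<le> (exp 1 * real (n + m) / real m) ^ m" unfolding N_def by (rule binom_upper[OF assms(1)])
  hence "N powr (1 / real m) \<le> ((exp 1 * real (n + m) / real m) ^ m) powr (1 / real m)"
    using Npos by (intro powr_mono2) auto
  also have "\<dots> = exp 1 * real (n + m) / real m"
    using mpos by (simp add: powr_realpow[symmetric] powr_powr)
  also have "\<dots> \<le> 8 * exp 1 * x"
  proof -
    have "real m * x = real m + real n - 1" unfolding x_def using mpos by (simp add: field_simps)
    hence "real (n+m) \<le> 8 * (real m * x)" using assms by simp
    hence "real (n + m) / real m \<le> 8 * x" using mpos by (simp add: divide_le_eq algebra_simps)
    hence "exp 1 * (real (n + m) / real m) \<le> exp 1 * (8 * x)" by (rule mult_left_mono) simp
    thus ?thesis by (simp add: algebra_simps)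
  qed
  finally have "sqrt (N powr (1 / real m)) \<le> sqrt (8 * exp 1 * x)" by simp
  also have "sqrt (8 * exp 1 * x) = 2 * sqrt (2 * exp 1) * sqrt x"
  proof -
    have "8 * exp 1 * x = 2^2 * (2 * exp 1) * x" by simp
    thus ?thesis by (simp only: real_sqrt_mult real_sqrt_abs)
  qed
  finally show "N powr (1 / (2 * real m)) \<le> 2 * sqrt (2 * exp 1) * sqrt (1 + (real n - 1) / real m)"
    unfolding rt x_def .
qed

section \<open>Grid and Parseval\<close>

definition iota :: "nat \<Rightarrow> nat \<Rightarrow> (nat \<Rightarrow> nat) \<Rightarrow> nat" where
  "iota m n \<alpha> = (\<Sum>j<n. \<alpha> j * Suc m ^ j)"

lemma iota_bound: "(\<forall>j<n. \<alpha> j \<le> m) \<Longrightarrow> iota m n \<alpha> < Suc m ^ n"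
proof (induction n)
  case 0 thus ?case by (simp add: iota_def)
next
  case (Suc n)
  have "iota m (Suc n) \<alpha> = iota m n \<alpha> + \<alpha> n * Suc m ^ n" by (simp add: iota_def)
  also have "\<dots> < Suc m ^ n + m * Suc m ^ n"
    using Suc by (intro add_less_le_mono mult_right_mono) auto
  also have "\<dots> = Suc m ^ Suc n" by simp
  finally show ?case .
qed

lemma iota_inj: "(\<forall>j<n. \<alpha> j \<le> m) \<Longrightarrow> (\<forall>j<n. \<beta> j \<le> m) \<Longrightarrow> iota m n \<alpha> = iota m n \<beta>
   \<Longrightarrow> \<forall>j<n. \<alpha> j = \<beta> j"
proof (induction n)
  case 0 thus ?case by simp
next
  case (Suc n)
  let ?B = "Suc m ^ n"
  have a: "iota m n \<alpha> < ?B" "iota m n \<beta> < ?B" using Suc.prems iota_bound by auto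
  have e: "iota m n \<alpha> + \<alpha> n * ?B = iota m n \<beta> + \<beta> n * ?B" using Suc.prems(3) by (simp add: iota_def)
  have d: "(x + y * ?B) div ?B = y" if "x < ?B" for x y using that by simp
  have "\<alpha> n = \<beta> n" using d[OF a(1), of "\<alpha> n"] d[OF a(2), of "\<beta> n"] e by simp
  with e have "iota m n \<alpha> = iota m n \<beta>" by simp
  with Suc have "\<forall>j<n. \<alpha> j = \<beta> j" by auto
  with \<open>\<alpha> n = \<beta> n\<close> show ?case using less_Suc_eq by auto
qed

lemma multi_idx_le: "\<alpha> \<in> multi_idx m n \<Longrightarrow> j < n \<Longrightarrow> \<alpha> j \<le> m"
  unfolding multi_idx_def using member_le_sum[of j "{..<n}" \<alpha>] by auto

lemma multi_idx_eqI: "\<alpha> \<in> multi_idx m n \<Longrightarrow> \<beta> \<in> multi_idx m n \<Longrightarrow> \<forall>j<n. \<alpha> j = \<beta> j \<Longrightarrow> \<alpha> = \<beta>"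
proof
  fix j assume "\<alpha> \<in> multi_idx m n" "\<beta> \<in> multi_idx m n" "\<forall>j<n. \<alpha> j = \<beta> j"
  thus "\<alpha> j = \<beta> j" unfolding multi_idx_def by (cases "j < n") auto
qed

lemma iota_inj_multi:
  assumes "\<alpha> \<in> multi_idx m n" "\<beta> \<in> multi_idx m n"
  shows "iota m n \<alpha> = iota m n \<beta> \<longleftrightarrow> \<alpha> = \<beta>"
  using iota_inj[of n \<alpha> m \<beta>] multi_idx_le[OF assms(1)] multi_idx_le[OF assms(2)]
    multi_idx_eqI[OF assms] by auto

definition ee :: "nat \<Rightarrow> nat \<Rightarrow> nat \<Rightarrow> (nat \<Rightarrow> nat) \<Rightarrow> complex" where
  "ee m n t \<alpha> = cis (2 * pi * real t * real (iota m n \<alpha>) / real (Suc m ^ n))"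

definition pt :: "nat \<Rightarrow> nat \<Rightarrow> nat \<Rightarrow> nat \<Rightarrow> complex" where
  "pt m n t = (\<lambda>j. cis (2 * pi * real t * real (Suc m ^ j) / real (Suc m ^ n)))"

lemma prod_cis: "(\<Prod>j\<in>A. cis (f j)) = cis (\<Sum>j\<in>A. f j)"
  by (induction A rule: infinite_finite_induct) (auto simp: cis_mult)

lemma pt_prod: "(\<Prod>j<n. pt m n t j ^ \<alpha> j) = ee m n t \<alpha>"
proof -
  let ?K = "real (Suc m ^ n)"
  have "(\<Prod>j<n. pt m n t j ^ \<alpha> j) = (\<Prod>j<n. cis (real (\<alpha> j) * (2 * pi * real t * real (Suc m ^ j) / ?K)))"
    by (intro prod.cong refl) (simp only: pt_def Complex.DeMoivre)
  also have "\<dots> = cis (\<Sum>j<n. real (\<alpha> j) * (2 * pi * real t * real (Suc m ^ j) / ?K))"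
    by (rule prod_cis)
  also have "(\<Sum>j<n. real (\<alpha> j) * (2 * pi * real t * real (Suc m ^ j) / ?K))
      = 2 * pi * real t * real (iota m n \<alpha>) / ?K"
    by (simp add: iota_def sum_distrib_left sum_divide_distrib mult_ac)
  finally show ?thesis by (simp add: ee_def)
qed

lemma eval_pt: "poly_eval m n c (pt m n t) = (\<Sum>\<alpha>\<in>multi_idx m n. c \<alpha> * ee m n t \<alpha>)"
  by (simp add: poly_eval_def pt_prod)

lemma pt_torus: "pt m n t \<in> torus n"
  by (simp add: torus_def pt_def)

lemma cis_ne_1:
  fixes d :: real and K :: nat
  assumes "K > 0" "\<bar>d\<bar> < real K" "d \<noteq> 0"
  shows "cis (2 * pi * d / real K) \<noteq> 1"
proof
  assume "cis (2 * pi * d / real K) = 1"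
  hence "cos (2 * pi * d / real K) = 1" by (simp add: complex_eq_iff)
  then obtain i :: int where i: "2 * pi * d / real K = real_of_int i * 2 * pi"
    by (auto simp: cos_one_2pi_int)
  hence di: "d / real K = real_of_int i" using assms(1) by (simp add: field_simps)
  have d2: "d = real_of_int i * real K" using di assms(1) by (simp add: field_simps)
  have "\<bar>real_of_int i\<bar> * real K < 1 * real K" using assms(2) d2 by (simp add: abs_mult)
  hence "\<bar>real_of_int i\<bar> < 1" by (rule mult_right_less_imp_less) simp
  hence "i = 0" by linarith
  hence "d = 0" using di assms(1) by simp
  with assms(3) show False ..
qed

lemma orth:
  fixes a b K :: nat
  assumes "K > 0" "a < K" "b < K"
  shows "(\<Sum>t<K. cis (2 * pi * real t * real a / real K) * cnj (cis (2 * pi * real t * real b / real K)))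
     = (if a = b then of_nat K else 0)"
proof -
  define r where "r = cis (2 * pi * (real a - real b) / real K)"
  have tm: "cis (2 * pi * real t * real a / real K) * cnj (cis (2 * pi * real t * real b / real K)) = r ^ t" for t
    unfolding r_def by (simp add: cis_cnj cis_mult Complex.DeMoivre algebra_simps diff_divide_distrib)
  have S: "(\<Sum>t<K. cis (2 * pi * real t * real a / real K) * cnj (cis (2 * pi * real t * real b / real K)))
     = (\<Sum>t<K. r ^ t)" by (simp only: tm)
  have "(\<Sum>t<K. r ^ t) = (if a = b then of_nat K else 0)"
  proof (cases "a = b")
    case True
    hence "r = 1" unfolding r_def by simp
    thus ?thesis using True by simp
  next
    case False
    have r1: "r \<noteq> 1" unfolding r_def
      by (rule cis_ne_1) (use assms False in auto)
    have "r ^ K = cis (2 * pi * (real a - real b))"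
      unfolding r_def Complex.DeMoivre using assms(1) by simp
    also have "\<dots> = 1"
      by (rule cis_multiple_2pi) (simp add: Ints_diff)
    finally have rK: "r ^ K = 1" .
    show ?thesis using False r1 rK by (simp add: sum_gp_strict)
  qed
  with S show ?thesis by (rule trans)
qed

lemma parseval:
  "(\<Sum>t<Suc m ^ n. (cmod (\<Sum>\<alpha>\<in>multi_idx m n. c \<alpha> * ee m n t \<alpha>))\<^sup>2)
     = real (Suc m ^ n) * (\<Sum>\<alpha>\<in>multi_idx m n. (cmod (c \<alpha>))\<^sup>2)"
proof -
  let ?L = "multi_idx m n" and ?K = "Suc m ^ n"
  have fin: "finite ?L" by (rule finite_multi_idx)
  have o: "(\<Sum>t<?K. ee m n t \<alpha> * cnj (ee m n t \<beta>)) = (if \<alpha> = \<beta> then of_nat ?K else 0)"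
    if "\<alpha> \<in> ?L" "\<beta> \<in> ?L" for \<alpha> \<beta>
  proof -
    have "(\<Sum>t<?K. ee m n t \<alpha> * cnj (ee m n t \<beta>)) = (if iota m n \<alpha> = iota m n \<beta> then of_nat ?K else 0)"
      unfolding ee_def
      by (rule orth) (use iota_bound multi_idx_le that in auto)
    thus ?thesis using iota_inj_multi[OF that] by simp
  qed
  have "complex_of_real (\<Sum>t<?K. (cmod (\<Sum>\<alpha>\<in>?L. c \<alpha> * ee m n t \<alpha>))\<^sup>2)
      = (\<Sum>t<?K. (\<Sum>\<alpha>\<in>?L. c \<alpha> * ee m n t \<alpha>) * cnj (\<Sum>\<beta>\<in>?L. c \<beta> * ee m n t \<beta>))"
    by (simp only: of_real_sum complex_norm_square)
  also have "\<dots> = (\<Sum>t<?K. \<Sum>\<alpha>\<in>?L. \<Sum>\<beta>\<in>?L. (c \<alpha> * cnj (c \<beta>)) * (ee m n t \<alpha> * cnj (ee m n t \<beta>)))"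
    by (simp add: cnj_sum sum_product mult_ac)
  also have "\<dots> = (\<Sum>\<alpha>\<in>?L. \<Sum>\<beta>\<in>?L. (c \<alpha> * cnj (c \<beta>)) * (\<Sum>t<?K. ee m n t \<alpha> * cnj (ee m n t \<beta>)))"
    by (simp only: sum.swap[of _ "{..<?K}" ?L] sum_distrib_left)
  also have "\<dots> = (\<Sum>\<alpha>\<in>?L. \<Sum>\<beta>\<in>?L. (c \<alpha> * cnj (c \<beta>)) * (if \<alpha> = \<beta> then of_nat ?K else 0))"
    by (intro sum.cong refl) (simp add: o)
  also have "\<dots> = (\<Sum>\<alpha>\<in>?L. (c \<alpha> * cnj (c \<alpha>)) * of_nat ?K)"
    using fin by (simp add: if_distrib sum.delta cong: if_cong)
  also have "\<dots> = (\<Sum>\<alpha>\<in>?L. complex_of_real (real ?K) * complex_of_real ((cmod (c \<alpha>))\<^sup>2))"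
    by (intro sum.cong refl) (simp only: complex_norm_square of_real_of_nat_eq mult.commute)
  also have "\<dots> = complex_of_real (real ?K * (\<Sum>\<alpha>\<in>?L. (cmod (c \<alpha>))\<^sup>2))"
    by (simp only: of_real_mult of_real_sum sum_distrib_left)
  finally show ?thesis by (simp only: of_real_eq_iff)
qed


section \<open>Sup norm and dual ball\<close>

lemma poly_term_norm:
  assumes "z \<in> torus n"
  shows "cmod (\<Prod>j<n. z j ^ \<alpha> j) = 1"
proof -
  have "cmod (\<Prod>j<n. z j ^ \<alpha> j) = (\<Prod>j<n. cmod (z j ^ \<alpha> j))" by (simp add: prod_norm)
  also have "\<dots> = (\<Prod>j<n. 1)"
    by (rule prod.cong) (use assms in \<open>auto simp: torus_def norm_power\<close>)
  finally show ?thesis by simp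
qed

lemma eval_bound:
  assumes "z \<in> torus n"
  shows "cmod (poly_eval m n c z) \<le> (\<Sum>\<alpha>\<in>multi_idx m n. cmod (c \<alpha>))"
proof -
  have "cmod (poly_eval m n c z) \<le> (\<Sum>\<alpha>\<in>multi_idx m n. cmod (c \<alpha> * (\<Prod>j<n. z j ^ \<alpha> j)))"
    unfolding poly_eval_def by (rule norm_sum)
  also have "\<dots> = (\<Sum>\<alpha>\<in>multi_idx m n. cmod (c \<alpha>))"
    by (rule sum.cong) (simp_all add: norm_mult poly_term_norm[OF assms])
  finally show ?thesis .
qed

lemma torus_ne: "(\<lambda>_. 1) \<in> torus n" by (simp add: torus_def)

lemma bdd_eval: "bdd_above ((\<lambda>z. cmod (poly_eval m n c z)) ` torus n)"
  using eval_bound by (intro bdd_aboveI2) blast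

lemma eval_le_norm: "z \<in> torus n \<Longrightarrow> cmod (poly_eval m n c z) \<le> poly_norm m n c"
  unfolding poly_norm_def by (rule cSUP_upper[OF _ bdd_eval])

lemma norm_le_sum: "poly_norm m n c \<le> (\<Sum>\<alpha>\<in>multi_idx m n. cmod (c \<alpha>))"
  unfolding poly_norm_def
proof (rule cSUP_least)
  show "torus n \<noteq> {}" using torus_ne by blast
next
  fix z assume "z \<in> torus n"
  thus "cmod (poly_eval m n c z) \<le> (\<Sum>\<alpha>\<in>multi_idx m n. cmod (c \<alpha>))" by (rule eval_bound)
qed

lemma poly_norm_nonneg: "0 \<le> poly_norm m n c"
proof -
  have "cmod (poly_eval m n c (\<lambda>_. 1)) \<le> poly_norm m n c" by (rule eval_le_norm[OF torus_ne])
  thus ?thesis using norm_ge_zero order_trans by blast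
qed

lemma zero_dual: "(\<lambda>_. 0) \<in> dual_ball m n"
  by (simp add: dual_ball_def poly_norm_nonneg)

lemma eval_dual:
  assumes "z \<in> torus n"
  shows "(\<lambda>c. poly_eval m n c z) \<in> dual_ball m n"
  unfolding dual_ball_def
proof (intro CollectI conjI ballI allI)
  fix c d :: "(nat \<Rightarrow> nat) \<Rightarrow> complex" and a b :: complex
  show "poly_eval m n (\<lambda>\<alpha>. a * c \<alpha> + b * d \<alpha>) z = a * poly_eval m n c z + b * poly_eval m n d z"
    by (simp add: poly_eval_def sum.distrib sum_distrib_left algebra_simps)
next
  fix c show "cmod (poly_eval m n c z) \<le> poly_norm m n c" by (rule eval_le_norm[OF assms])
qed

lemma dual_bound: "\<phi> \<in> dual_ball m n \<Longrightarrow> c \<in> polys m n \<Longrightarrow> cmod (\<phi> c) \<le> poly_norm m n c"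
  by (simp add: dual_ball_def)

lemma dual_lin: "\<phi> \<in> dual_ball m n \<Longrightarrow> c \<in> polys m n \<Longrightarrow> d \<in> polys m n \<Longrightarrow>
   \<phi> (\<lambda>\<alpha>. a * c \<alpha> + b * d \<alpha>) = a * \<phi> c + b * \<phi> d"
  by (simp add: dual_ball_def)

lemma zero_polys: "(\<lambda>_. 0) \<in> polys m n" by (simp add: polys_def)

lemma sum_polys: "(\<forall>i\<in>A. g i \<in> polys m n) \<Longrightarrow> (\<lambda>\<alpha>. \<Sum>i\<in>A. w i * g i \<alpha>) \<in> polys m n"
  by (simp add: polys_def)

lemma dual_sum:
  assumes "\<phi> \<in> dual_ball m n" "finite A" "\<forall>i\<in>A. g i \<in> polys m n"
  shows "\<phi> (\<lambda>\<alpha>. \<Sum>i\<in>A. w i * g i \<alpha>) = (\<Sum>i\<in>A. w i * \<phi> (g i))"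
  using assms(2,3)
proof (induction A rule: finite_induct)
  case empty
  have "\<phi> (\<lambda>\<alpha>. 0 * (\<lambda>_. 0) \<alpha> + 0 * (\<lambda>_. 0) \<alpha>) = 0 * \<phi> (\<lambda>_. 0) + 0 * \<phi> (\<lambda>_. 0)"
    by (rule dual_lin[OF assms(1) zero_polys zero_polys])
  thus ?case by simp
next
  case (insert i A)
  have p: "(\<lambda>\<alpha>. \<Sum>i\<in>A. w i * g i \<alpha>) \<in> polys m n" using insert by (intro sum_polys) auto
  have eq: "(\<lambda>\<alpha>. \<Sum>i\<in>insert i A. w i * g i \<alpha>) = (\<lambda>\<alpha>. w i * g i \<alpha> + 1 * (\<lambda>\<alpha>. \<Sum>i\<in>A. w i * g i \<alpha>) \<alpha>)"
    using insert by simp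
  have "\<phi> (\<lambda>\<alpha>. \<Sum>i\<in>insert i A. w i * g i \<alpha>) = w i * \<phi> (g i) + 1 * \<phi> (\<lambda>\<alpha>. \<Sum>i\<in>A. w i * g i \<alpha>)"
    unfolding eq by (rule dual_lin[OF assms(1)]) (use insert p in auto)
  thus ?case using insert by simp
qed

section \<open>Weak l2 norm\<close>

lemma weak_bdd:
  assumes "set xs \<subseteq> polys m n"
  shows "bdd_above ((\<lambda>\<phi>. sqrt (\<Sum>x\<leftarrow>xs. (cmod (\<phi> x))\<^sup>2)) ` dual_ball m n)"
proof (rule bdd_aboveI2)
  fix \<phi> assume "\<phi> \<in> dual_ball m n"
  hence "(\<Sum>x\<leftarrow>xs. (cmod (\<phi> x))\<^sup>2) \<le> (\<Sum>x\<leftarrow>xs. (poly_norm m n x)\<^sup>2)"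
    using assms by (intro sum_list_mono power_mono dual_bound) auto
  thus "sqrt (\<Sum>x\<leftarrow>xs. (cmod (\<phi> x))\<^sup>2) \<le> sqrt (\<Sum>x\<leftarrow>xs. (poly_norm m n x)\<^sup>2)"
    by (rule real_sqrt_le_mono)
qed

lemma weak_ge:
  assumes "set xs \<subseteq> polys m n" "\<phi> \<in> dual_ball m n"
  shows "sqrt (\<Sum>x\<leftarrow>xs. (cmod (\<phi> x))\<^sup>2) \<le> weak_l2 m n xs"
  unfolding weak_l2_def by (rule cSUP_upper[OF assms(2) weak_bdd[OF assms(1)]])

lemma weak_nonneg:
  assumes "set xs \<subseteq> polys m n"
  shows "0 \<le> weak_l2 m n xs"
  using weak_ge[OF assms zero_dual] by simp

lemma sum_list_sum_swap: "(\<Sum>x\<leftarrow>xs. \<Sum>t\<in>T. f x t) = (\<Sum>t\<in>T. \<Sum>x\<leftarrow>xs. f x t)"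
  by (induction xs) (simp_all add: sum.distrib)

lemma sum_list_upt_map: "(\<Sum>x\<leftarrow>map q [0..<K]. f x) = (\<Sum>t<K. f (q t))"
  by (induction K) auto

lemma sqrt_le_sq: "0 \<le> a \<Longrightarrow> sqrt a \<le> w \<Longrightarrow> a \<le> w\<^sup>2"
  by (metis real_sqrt_le_iff real_sqrt_pow2 real_sqrt_power power2_eq_square sqrt_le_D)

lemma coeff_le_weak:
  assumes "set xs \<subseteq> polys m n"
  shows "(\<Sum>x\<leftarrow>xs. \<Sum>\<alpha>\<in>multi_idx m n. (cmod (x \<alpha>))\<^sup>2) \<le> (weak_l2 m n xs)\<^sup>2"
proof -
  let ?K = "Suc m ^ n" and ?L = "multi_idx m n"
  have t: "(\<Sum>x\<leftarrow>xs. (cmod (poly_eval m n x (pt m n t)))\<^sup>2) \<le> (weak_l2 m n xs)\<^sup>2" for t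
  proof (rule sqrt_le_sq)
    show "0 \<le> (\<Sum>x\<leftarrow>xs. (cmod (poly_eval m n x (pt m n t)))\<^sup>2)" by (rule sum_list_nonneg) auto
    show "sqrt (\<Sum>x\<leftarrow>xs. (cmod (poly_eval m n x (pt m n t)))\<^sup>2) \<le> weak_l2 m n xs"
      using weak_ge[OF assms eval_dual[OF pt_torus]] by simp
  qed
  have "real ?K * (\<Sum>x\<leftarrow>xs. \<Sum>\<alpha>\<in>?L. (cmod (x \<alpha>))\<^sup>2)
      = (\<Sum>x\<leftarrow>xs. real ?K * (\<Sum>\<alpha>\<in>?L. (cmod (x \<alpha>))\<^sup>2))"
    by (simp add: sum_list_const_mult)
  also have "\<dots> = (\<Sum>x\<leftarrow>xs. \<Sum>t<?K. (cmod (poly_eval m n x (pt m n t)))\<^sup>2)"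
    by (simp add: eval_pt parseval)
  also have "\<dots> = (\<Sum>t<?K. \<Sum>x\<leftarrow>xs. (cmod (poly_eval m n x (pt m n t)))\<^sup>2)"
    by (rule sum_list_sum_swap)
  also have "\<dots> \<le> (\<Sum>t<?K. (weak_l2 m n xs)\<^sup>2)"
    by (rule sum_mono) (rule t)
  also have "\<dots> = real ?K * (weak_l2 m n xs)\<^sup>2" by simp
  finally show ?thesis by simp
qed


section \<open>Power mean inequality\<close>

lemma power_mean:
  fixes u :: "'i \<Rightarrow> real"
  assumes fin: "finite I" and u0: "\<forall>i. 0 \<le> u i" and p1: "1 \<le> p" and p2: "p \<le> 2"
  shows "(\<Sum>i\<in>I. u i powr p) powr (1/p) \<le> real (card I) powr (1/p - 1/2) * sqrt (\<Sum>i\<in>I. (u i)\<^sup>2)"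
proof -
  define J where "J = {i\<in>I. u i > 0}"
  have JI: "J \<subseteq> I" unfolding J_def by auto
  have finJ: "finite J" using fin JI finite_subset by blast
  have z: "u i = 0" if "i \<in> I - J" for i using that u0[rule_format, of i] unfolding J_def by auto
  have sp: "(\<Sum>i\<in>I. u i powr p) = (\<Sum>i\<in>J. u i powr p)"
    by (rule sum.mono_neutral_right[OF fin JI]) (use z in auto)
  have s2: "(\<Sum>i\<in>I. (u i)\<^sup>2) = (\<Sum>i\<in>J. (u i)\<^sup>2)"
    by (rule sum.mono_neutral_right[OF fin JI]) (use z in auto)
  have e0: "0 \<le> 1/p - 1/2" using p1 p2 by (simp add: field_simps)
  show ?thesis
  proof (cases "J = {}")
    case True
    hence "(\<Sum>i\<in>I. u i powr p) = 0" using sp by simp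
    moreover have "0 \<le> real (card I) powr (1/p - 1/2) * sqrt (\<Sum>i\<in>I. (u i)\<^sup>2)"
      by (intro mult_nonneg_nonneg real_sqrt_ge_zero sum_nonneg) auto
    ultimately show ?thesis by simp
  next
    case False
    define N where "N = real (card J)"
    have Npos: "N > 0" unfolding N_def using False finJ by (simp add: card_gt_0_iff)
    define Sp where "Sp = (\<Sum>i\<in>J. u i powr p)"
    define S2 where "S2 = (\<Sum>i\<in>J. (u i)\<^sup>2)"
    have upos: "u i > 0" if "i \<in> J" for i using that unfolding J_def by auto
    have Sp0: "Sp \<ge> 0" unfolding Sp_def by (simp add: sum_nonneg)
    have S20: "S2 \<ge> 0" unfolding S2_def by (simp add: sum_nonneg)
    have conv: "convex_on {0<..} (\<lambda>x. x powr (2/p))" by (rule powr_convex) (use p1 p2 in \<open>simp add: field_simps\<close>)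
    have J: "(\<lambda>x. x powr (2/p)) (\<Sum>i\<in>J. (1/N) *\<^sub>R (u i powr p)) \<le> (\<Sum>i\<in>J. (1/N) * (\<lambda>x. x powr (2/p)) (u i powr p))"
      by (rule convex_on_sum[OF finJ False conv]) (use Npos in \<open>auto simp: N_def dest: upos\<close>)
    have l: "(\<Sum>i\<in>J. (1/N) *\<^sub>R (u i powr p)) = Sp / N"
      unfolding Sp_def by (simp add: sum_divide_distrib)
    have r: "(\<Sum>i\<in>J. (1/N) * (\<lambda>x. x powr (2/p)) (u i powr p)) = S2 / N"
    proof -
      have "(u i powr p) powr (2/p) = (u i)\<^sup>2" if "i \<in> J" for i
      proof -
        have "(u i powr p) powr (2/p) = u i powr 2" using p1 by (simp add: powr_powr)
        also have "\<dots> = (u i)\<^sup>2" using upos[OF that] by (simp add: powr_numeral)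
        finally show ?thesis .
      qed
      hence "(\<Sum>i\<in>J. (1/N) * (\<lambda>x. x powr (2/p)) (u i powr p)) = (\<Sum>i\<in>J. (1/N) * (u i)\<^sup>2)"
        by (intro sum.cong refl) simp
      thus ?thesis unfolding S2_def by (simp add: sum_divide_distrib)
    qed
    have star: "(Sp / N) powr (2/p) \<le> S2 / N" using J unfolding l r by simp
    hence "((Sp / N) powr (2/p)) powr (p/2) \<le> (S2 / N) powr (p/2)"
      by (intro powr_mono2) (use p1 in auto)
    moreover have "((Sp / N) powr (2/p)) powr (p/2) = Sp / N"
      using p1 Sp0 Npos by (simp add: powr_powr)
    ultimately have "Sp / N \<le> (S2 / N) powr (p/2)" by simp
    hence "(Sp / N) powr (1/p) \<le> ((S2 / N) powr (p/2)) powr (1/p)"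
      using Sp0 Npos p1 by (intro powr_mono2) auto
    also have "((S2 / N) powr (p/2)) powr (1/p) = (S2 / N) powr (1/2)"
      using p1 by (simp add: powr_powr)
    finally have "Sp powr (1/p) / N powr (1/p) \<le> S2 powr (1/2) / N powr (1/2)"
      by (simp add: powr_divide Sp0 S20 Npos less_imp_le)
    hence "Sp powr (1/p) \<le> N powr (1/p) / N powr (1/2) * S2 powr (1/2)"
      using Npos by (simp add: divide_le_eq field_simps)
    also have "N powr (1/p) / N powr (1/2) = N powr (1/p - 1/2)" by (simp add: powr_diff)
    also have "N powr (1/p - 1/2) \<le> real (card I) powr (1/p - 1/2)"
      unfolding N_def using e0 by (intro powr_mono2) (auto intro: card_mono[OF fin JI])
    finally have "Sp powr (1/p) \<le> real (card I) powr (1/p - 1/2) * S2 powr (1/2)"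
      using S20 by (simp add: mult_right_mono)
    thus ?thesis unfolding sp s2 Sp_def[symmetric] S2_def[symmetric] using S20 by (simp add: powr_half_sqrt)
  qed
qed


lemma linf_ge:
  assumes "\<alpha> \<in> multi_idx m n"
  shows "cmod (\<xi> \<alpha>) \<le> linf_norm (multi_idx m n) \<xi>"
  unfolding linf_norm_def
  by (rule cSUP_upper[OF assms]) (intro bdd_above_finite finite_imageI finite_multi_idx)

lemma linf_nonneg: "0 \<le> linf_norm (multi_idx m n) \<xi>"
  by (rule order_trans[OF norm_ge_zero linf_ge[OF zero_in_multi_idx]])

lemma lp_le:
  assumes "m \<ge> 1"
  shows "(lp_norm (2 * real m / (real m + 1)) (multi_idx m n) v)\<^sup>2
     \<le> real (card (multi_idx m n)) powr (1 / real m) * (\<Sum>\<alpha>\<in>multi_idx m n. (cmod (v \<alpha>))\<^sup>2)"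
proof -
  define p where "p = 2 * real m / (real m + 1)"
  define N where "N = real (card (multi_idx m n))"
  define S where "S = (\<Sum>\<alpha>\<in>multi_idx m n. (cmod (v \<alpha>))\<^sup>2)"
  have mpos: "real m > 0" using assms by simp
  have p1: "1 \<le> p" unfolding p_def using assms by (simp add: field_simps)
  have p2: "p \<le> 2" unfolding p_def using assms by (simp add: field_simps)
  have ex: "1/p - 1/2 = 1 / (2 * real m)" unfolding p_def using mpos by (simp add: field_simps)
  have S0: "S \<ge> 0" unfolding S_def by (simp add: sum_nonneg)
  have "lp_norm p (multi_idx m n) v \<le> N powr (1 / (2 * real m)) * sqrt S"
    unfolding lp_norm_def N_def S_def ex[symmetric]
    by (rule power_mean[OF finite_multi_idx _ p1 p2]) simp
  moreover have "0 \<le> lp_norm p (multi_idx m n) v" unfolding lp_norm_def by simp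
  ultimately have "(lp_norm p (multi_idx m n) v)\<^sup>2 \<le> (N powr (1 / (2 * real m)) * sqrt S)\<^sup>2"
    by (rule power_mono)
  also have "\<dots> = (N powr (1 / (2 * real m)) * N powr (1 / (2 * real m))) * S"
    using S0 by (simp add: power_mult_distrib power2_eq_square[of "N powr _"])
  also have "N powr (1 / (2 * real m)) * N powr (1 / (2 * real m)) = N powr (1 / real m)"
    by (simp add: powr_add[symmetric])
  finally show ?thesis unfolding p_def N_def S_def .
qed

lemma upper_mem:
  assumes "m \<ge> 1"
  shows "real (card (multi_idx m n)) powr (1/(2*real m)) * linf_norm (multi_idx m n) \<xi> \<in>
     {C. C \<ge> 0 \<and> (\<forall>xs. set xs \<subseteq> polys m n \<longrightarrow>
        sqrt (\<Sum>x\<leftarrow>xs. (lp_norm (2 * real m / (real m + 1)) (multi_idx m n) (mult_op \<xi> x))\<^sup>2)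
          \<le> C * weak_l2 m n xs)}"
proof -
  let ?L = "multi_idx m n"
  define N where "N = real (card ?L)"
  define L where "L = linf_norm ?L \<xi>"
  define A where "A = N powr (1/(2*real m))"
  define p where "p = 2 * real m / (real m + 1)"
  have L0: "L \<ge> 0" unfolding L_def by (rule linf_nonneg)
  have A0: "A \<ge> 0" unfolding A_def by simp
  have A2: "A\<^sup>2 = N powr (1 / real m)"
    unfolding A_def by (simp add: power2_eq_square powr_add[symmetric])
  have per: "(lp_norm p ?L (mult_op \<xi> x))\<^sup>2 \<le> A\<^sup>2 * L\<^sup>2 * (\<Sum>\<alpha>\<in>?L. (cmod (x \<alpha>))\<^sup>2)" for x
  proof -
    have "(lp_norm p ?L (mult_op \<xi> x))\<^sup>2 \<le> N powr (1 / real m) * (\<Sum>\<alpha>\<in>?L. (cmod (mult_op \<xi> x \<alpha>))\<^sup>2)"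
      unfolding p_def N_def by (rule lp_le[OF assms])
    also have "(\<Sum>\<alpha>\<in>?L. (cmod (mult_op \<xi> x \<alpha>))\<^sup>2) \<le> (\<Sum>\<alpha>\<in>?L. L\<^sup>2 * (cmod (x \<alpha>))\<^sup>2)"
    proof (rule sum_mono)
      fix \<alpha> assume a: "\<alpha> \<in> ?L"
      have "cmod (\<xi> \<alpha>) \<le> L" unfolding L_def by (rule linf_ge[OF a])
      hence "(cmod (\<xi> \<alpha>))\<^sup>2 \<le> L\<^sup>2" by (intro power_mono) auto
      thus "(cmod (mult_op \<xi> x \<alpha>))\<^sup>2 \<le> L\<^sup>2 * (cmod (x \<alpha>))\<^sup>2"
        by (simp add: mult_op_def norm_mult power_mult_distrib mult_right_mono)
    qed
    also have "\<dots> = L\<^sup>2 * (\<Sum>\<alpha>\<in>?L. (cmod (x \<alpha>))\<^sup>2)" by (simp add: sum_distrib_left)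
    finally show ?thesis using A2 by (simp add: mult_left_mono mult.assoc)
  qed
  show ?thesis
  proof (intro CollectI conjI allI impI)
    show "0 \<le> real (card ?L) powr (1/(2*real m)) * linf_norm ?L \<xi>"
      using A0 L0 unfolding A_def L_def N_def by simp
  next
    fix xs assume xs: "set xs \<subseteq> polys m n"
    have w0: "0 \<le> weak_l2 m n xs" by (rule weak_nonneg[OF xs])
    have "(\<Sum>x\<leftarrow>xs. (lp_norm p ?L (mult_op \<xi> x))\<^sup>2) \<le> (\<Sum>x\<leftarrow>xs. A\<^sup>2 * L\<^sup>2 * (\<Sum>\<alpha>\<in>?L. (cmod (x \<alpha>))\<^sup>2))"
      by (rule sum_list_mono) (rule per)
    also have "\<dots> = A\<^sup>2 * L\<^sup>2 * (\<Sum>x\<leftarrow>xs. \<Sum>\<alpha>\<in>?L. (cmod (x \<alpha>))\<^sup>2)"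
      by (rule sum_list_const_mult)
    also have "\<dots> \<le> A\<^sup>2 * L\<^sup>2 * (weak_l2 m n xs)\<^sup>2"
      by (rule mult_left_mono[OF coeff_le_weak[OF xs]]) simp
    also have "\<dots> = (A * L * weak_l2 m n xs)\<^sup>2" by (simp add: power_mult_distrib)
    finally have "sqrt (\<Sum>x\<leftarrow>xs. (lp_norm p ?L (mult_op \<xi> x))\<^sup>2) \<le> sqrt ((A * L * weak_l2 m n xs)\<^sup>2)"
      by (rule real_sqrt_le_mono)
    also have "\<dots> = A * L * weak_l2 m n xs" using A0 L0 w0 by simp
    finally show "sqrt (\<Sum>x\<leftarrow>xs. (lp_norm (2 * real m / (real m + 1)) ?L (mult_op \<xi> x))\<^sup>2)
          \<le> real (card ?L) powr (1/(2*real m)) * linf_norm ?L \<xi> * weak_l2 m n xs"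
      unfolding A_def L_def N_def p_def .
  qed
qed

lemma sum_delta_poly:
  assumes "finite A"
  shows "(\<lambda>\<alpha>. \<Sum>\<beta>\<in>A. w \<beta> * (if \<alpha> = \<beta> then 1 else 0)) = (\<lambda>\<alpha>. if \<alpha> \<in> A then w \<alpha> else (0::complex))"
proof
  fix \<alpha>
  have "(\<Sum>\<beta>\<in>A. w \<beta> * (if \<alpha> = \<beta> then 1 else 0)) = (\<Sum>\<beta>\<in>A. if \<alpha> = \<beta> then w \<beta> else 0)"
    by (rule sum.cong) auto
  also have "\<dots> = (if \<alpha> \<in> A then w \<alpha> else 0)" using assms by (simp add: sum.delta')
  finally show "(\<Sum>\<beta>\<in>A. w \<beta> * (if \<alpha> = \<beta> then 1 else 0)) = (if \<alpha> \<in> A then w \<alpha> else 0)" .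
qed

lemma phi_bound:
  assumes phi: "\<phi> \<in> dual_ball m n"
  shows "(\<Sum>t<Suc m ^ n. (cmod (\<phi> (\<lambda>\<alpha>. if \<alpha> \<in> multi_idx m n then cnj (ee m n t \<alpha>) else 0)))\<^sup>2)
     \<le> real (Suc m ^ n) * real (card (multi_idx m n))"
proof -
  let ?L = "multi_idx m n" and ?K = "Suc m ^ n"
  define \<delta> where "\<delta> \<beta> = (\<lambda>\<alpha>::nat\<Rightarrow>nat. if \<alpha> = \<beta> then (1::complex) else 0)" for \<beta>
  define a where "a \<beta> = \<phi> (\<delta> \<beta>)" for \<beta>
  have fin: "finite ?L" by (rule finite_multi_idx)
  have dp: "\<forall>\<beta>\<in>?L. \<delta> \<beta> \<in> polys m n" unfolding \<delta>_def polys_def by auto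
  have rep: "(\<lambda>\<alpha>. if \<alpha> \<in> ?L then w \<alpha> else 0) = (\<lambda>\<alpha>. \<Sum>\<beta>\<in>?L. w \<beta> * \<delta> \<beta> \<alpha>)" for w
    unfolding \<delta>_def using sum_delta_poly[OF fin, of w] by simp
  have ev: "\<phi> (\<lambda>\<alpha>. if \<alpha> \<in> ?L then w \<alpha> else 0) = (\<Sum>\<beta>\<in>?L. w \<beta> * a \<beta>)" for w
    unfolding rep a_def by (rule dual_sum[OF phi fin dp])
  have T: "(\<Sum>\<beta>\<in>?L. (cmod (a \<beta>))\<^sup>2) \<le> real (card ?L)"
  proof -
    define T where "T = (\<Sum>\<beta>\<in>?L. (cmod (a \<beta>))\<^sup>2)"
    define r where "r = (\<lambda>\<alpha>. if \<alpha> \<in> ?L then cnj (a \<alpha>) else 0)"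
    have T0: "T \<ge> 0" unfolding T_def by (simp add: sum_nonneg)
    have rp: "r \<in> polys m n" unfolding r_def polys_def by auto
    have "\<phi> r = (\<Sum>\<beta>\<in>?L. cnj (a \<beta>) * a \<beta>)" unfolding r_def by (rule ev)
    also have "\<dots> = (\<Sum>\<beta>\<in>?L. complex_of_real ((cmod (a \<beta>))\<^sup>2))"
      by (rule sum.cong[OF refl]) (simp only: complex_norm_square mult.commute)
    also have "\<dots> = complex_of_real T" unfolding T_def by simp
    finally have "cmod (\<phi> r) = T" using T0 by simp
    hence "T \<le> poly_norm m n r" using dual_bound[OF phi rp] by simp
    also have "\<dots> \<le> (\<Sum>\<alpha>\<in>?L. cmod (r \<alpha>))" by (rule norm_le_sum)
    also have "\<dots> = (\<Sum>\<alpha>\<in>?L. 1 * cmod (a \<alpha>))" by (rule sum.cong) (simp_all add: r_def)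
    finally have T1: "T \<le> (\<Sum>\<alpha>\<in>?L. 1 * cmod (a \<alpha>))" .
    have "(\<Sum>\<alpha>\<in>?L. 1 * cmod (a \<alpha>))\<^sup>2 \<le> (\<Sum>\<alpha>\<in>?L. 1\<^sup>2) * (\<Sum>\<alpha>\<in>?L. (cmod (a \<alpha>))\<^sup>2)"
      by (rule Cauchy_Schwarz_ineq_sum)
    hence "(\<Sum>\<alpha>\<in>?L. 1 * cmod (a \<alpha>))\<^sup>2 \<le> real (card ?L) * T" unfolding T_def by simp
    moreover have "T\<^sup>2 \<le> (\<Sum>\<alpha>\<in>?L. 1 * cmod (a \<alpha>))\<^sup>2" using T1 T0 by (intro power_mono) auto
    ultimately have "T * T \<le> real (card ?L) * T" by (simp add: power2_eq_square)
    hence "T \<le> real (card ?L)" using T0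
      by (cases "T = 0") (auto simp: mult_le_cancel_right)
    thus ?thesis unfolding T_def .
  qed
  have "(\<Sum>t<?K. (cmod (\<phi> (\<lambda>\<alpha>. if \<alpha> \<in> ?L then cnj (ee m n t \<alpha>) else 0)))\<^sup>2)
      = (\<Sum>t<?K. (cmod (\<Sum>\<beta>\<in>?L. cnj (a \<beta>) * ee m n t \<beta>))\<^sup>2)"
  proof (rule sum.cong[OF refl])
    fix t
    have "\<phi> (\<lambda>\<alpha>. if \<alpha> \<in> ?L then cnj (ee m n t \<alpha>) else 0) = cnj (\<Sum>\<beta>\<in>?L. cnj (a \<beta>) * ee m n t \<beta>)"
      unfolding ev by (simp add: cnj_sum mult.commute)
    thus "(cmod (\<phi> (\<lambda>\<alpha>. if \<alpha> \<in> ?L then cnj (ee m n t \<alpha>) else 0)))\<^sup>2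
        = (cmod (\<Sum>\<beta>\<in>?L. cnj (a \<beta>) * ee m n t \<beta>))\<^sup>2"
      by (simp only: complex_mod_cnj)
  qed
  also have "\<dots> = real ?K * (\<Sum>\<beta>\<in>?L. (cmod (cnj (a \<beta>)))\<^sup>2)" by (rule parseval)
  also have "\<dots> \<le> real ?K * real (card ?L)" using T by simp
  finally show ?thesis .
qed


lemma lower_bound:
  assumes m1: "m \<ge> 1" and C0: "C \<ge> 0"
    and H: "\<forall>xs. set xs \<subseteq> polys m n \<longrightarrow>
        sqrt (\<Sum>x\<leftarrow>xs. (lp_norm (2 * real m / (real m + 1)) (multi_idx m n) (mult_op (\<lambda>_. 1) x))\<^sup>2)
          \<le> C * weak_l2 m n xs"
  shows "real (card (multi_idx m n)) powr (1/(2*real m)) \<le> C"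
proof -
  let ?L = "multi_idx m n" and ?K = "Suc m ^ n"
  define N where "N = real (card ?L)"
  define p where "p = 2 * real m / (real m + 1)"
  define q where "q t = (\<lambda>\<alpha>. if \<alpha> \<in> ?L then cnj (ee m n t \<alpha>) else 0)" for t
  define xs where "xs = map q [0..<?K]"
  have mpos: "real m > 0" using m1 by simp
  have "?L \<noteq> {}" using zero_in_multi_idx by blast
  hence "card ?L > 0" using finite_multi_idx by (simp add: card_gt_0_iff)
  hence Npos: "N > 0" unfolding N_def by simp
  have Kpos: "real ?K > 0" by simp
  have xsp: "set xs \<subseteq> polys m n" unfolding xs_def q_def polys_def by auto
  have lpq: "lp_norm p ?L (mult_op (\<lambda>_. 1) (q t)) = N powr (1/p)" for t
  proof -
    have "(\<Sum>\<alpha>\<in>?L. cmod (mult_op (\<lambda>_. 1) (q t) \<alpha>) powr p) = (\<Sum>\<alpha>\<in>?L. 1)"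
      by (rule sum.cong[OF refl]) (simp add: mult_op_def q_def ee_def)
    thus ?thesis unfolding lp_norm_def N_def by simp
  qed
  have lhs: "(\<Sum>x\<leftarrow>xs. (lp_norm p ?L (mult_op (\<lambda>_. 1) x))\<^sup>2) = real ?K * (N powr (1/p))\<^sup>2"
    unfolding xs_def sum_list_upt_map lpq by simp
  have wk: "weak_l2 m n xs \<le> sqrt (real ?K * N)"
    unfolding weak_l2_def
  proof (rule cSUP_least)
    show "dual_ball m n \<noteq> {}" using zero_dual by blast
  next
    fix \<phi> assume phi: "\<phi> \<in> dual_ball m n"
    have "(\<Sum>x\<leftarrow>xs. (cmod (\<phi> x))\<^sup>2) = (\<Sum>t<?K. (cmod (\<phi> (q t)))\<^sup>2)"
      unfolding xs_def sum_list_upt_map ..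
    also have "\<dots> \<le> real ?K * N" unfolding q_def N_def by (rule phi_bound[OF phi])
    finally show "sqrt (\<Sum>x\<leftarrow>xs. (cmod (\<phi> x))\<^sup>2) \<le> sqrt (real ?K * N)" by simp
  qed
  have h: "sqrt (\<Sum>x\<leftarrow>xs. (lp_norm p ?L (mult_op (\<lambda>_. 1) x))\<^sup>2) \<le> C * weak_l2 m n xs"
    using H[rule_format, OF xsp] unfolding p_def .
  have "sqrt (real ?K * (N powr (1/p))\<^sup>2) \<le> C * weak_l2 m n xs"
    using h by (simp only: lhs)
  also have "\<dots> \<le> C * sqrt (real ?K * N)" by (rule mult_left_mono[OF wk C0])
  finally have "sqrt (real ?K) * N powr (1/p) \<le> sqrt (real ?K) * (C * sqrt N)"
    by (simp add: real_sqrt_mult mult_ac)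
  hence a: "N powr (1/p) \<le> C * sqrt N" using Kpos by simp
  have "1/p = 1/(2*real m) + 1/2" unfolding p_def using mpos by (simp add: field_simps)
  hence "N powr (1/p) = N powr (1/(2*real m)) * sqrt N"
    using Npos by (simp add: powr_add powr_half_sqrt)
  hence "N powr (1/(2*real m)) * sqrt N \<le> C * sqrt N" using a by simp
  hence "N powr (1/(2*real m)) \<le> C" using Npos by simp
  thus ?thesis unfolding N_def .
qed

lemma linf_one: "linf_norm (multi_idx m n) (\<lambda>_. 1) = 1"
proof -
  have "multi_idx m n \<noteq> {}" using zero_in_multi_idx by blast
  thus ?thesis unfolding linf_norm_def by simp
qed

theorem lemma5p6:
  fixes m n :: nat
  assumes "m \<ge> 1" and "n \<ge> 1"
  shows "(\<forall>\<xi>::(nat \<Rightarrow> nat) \<Rightarrow> complex.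
            pi2 m n (mult_op \<xi>) (lp_norm (2 * real m / (real m + 1)) (multi_idx m n))
              \<le> real (card (multi_idx m n)) powr (1 / (2 * real m)) * linf_norm (multi_idx m n) \<xi>)
       \<and> sqrt (1 + (real n - 1) / real m)
            \<le> pi2 m n (mult_op (\<lambda>_. 1)) (lp_norm (2 * real m / (real m + 1)) (multi_idx m n))
       \<and> pi2 m n (mult_op (\<lambda>_. 1)) (lp_norm (2 * real m / (real m + 1)) (multi_idx m n))
            = real (card (multi_idx m n)) powr (1 / (2 * real m))
       \<and> real (card (multi_idx m n)) powr (1 / (2 * real m))
            \<le> 2 * sqrt (2 * exp 1) * sqrt (1 + (real n - 1) / real m)"
proof -
  let ?A = "real (card (multi_idx m n)) powr (1 / (2 * real m))"
  have bdd: "bdd_below {C. C \<ge> 0 \<and> P C}" for P :: "real \<Rightarrow> bool"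
    by (rule bdd_belowI[of _ 0]) auto
  have up: "pi2 m n (mult_op \<xi>) (lp_norm (2 * real m / (real m + 1)) (multi_idx m n))
              \<le> ?A * linf_norm (multi_idx m n) \<xi>" for \<xi>
    unfolding pi2_def by (rule cInf_lower[OF upper_mem[OF assms(1)] bdd])
  have eq: "pi2 m n (mult_op (\<lambda>_. 1)) (lp_norm (2 * real m / (real m + 1)) (multi_idx m n)) = ?A"
  proof (rule antisym)
    show "pi2 m n (mult_op (\<lambda>_. 1)) (lp_norm (2 * real m / (real m + 1)) (multi_idx m n)) \<le> ?A"
      using up[of "\<lambda>_. 1"] by (simp add: linf_one)
    show "?A \<le> pi2 m n (mult_op (\<lambda>_. 1)) (lp_norm (2 * real m / (real m + 1)) (multi_idx m n))"
      unfolding pi2_def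
    proof (rule cInf_greatest)
      show "{C. C \<ge> 0 \<and> (\<forall>xs. set xs \<subseteq> polys m n \<longrightarrow>
        sqrt (\<Sum>x\<leftarrow>xs. (lp_norm (2 * real m / (real m + 1)) (multi_idx m n) (mult_op (\<lambda>_. 1) x))\<^sup>2)
          \<le> C * weak_l2 m n xs)} \<noteq> {}"
        by (rule ex_in_conv[THEN iffD1], rule exI, rule upper_mem[OF assms(1)])
    next
      fix C assume "C \<in> {C. C \<ge> 0 \<and> (\<forall>xs. set xs \<subseteq> polys m n \<longrightarrow>
        sqrt (\<Sum>x\<leftarrow>xs. (lp_norm (2 * real m / (real m + 1)) (multi_idx m n) (mult_op (\<lambda>_. 1) x))\<^sup>2)
          \<le> C * weak_l2 m n xs)}"
      hence "C \<ge> 0" "\<forall>xs. set xs \<subseteq> polys m n \<longrightarrow>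
        sqrt (\<Sum>x\<leftarrow>xs. (lp_norm (2 * real m / (real m + 1)) (multi_idx m n) (mult_op (\<lambda>_. 1) x))\<^sup>2)
          \<le> C * weak_l2 m n xs" by simp_all
      thus "?A \<le> C" by (rule lower_bound[OF assms(1)])
    qed
  qed
  have nb: "sqrt (1 + (real n - 1) / real m) \<le> ?A" "?A \<le> 2 * sqrt (2 * exp 1) * sqrt (1 + (real n - 1) / real m)"
    using numeric_bounds[OF assms] by (simp_all add: card_multi_idx)
  show ?thesis
  proof (intro conjI allI)
    fix \<xi> :: "(nat \<Rightarrow> nat) \<Rightarrow> complex"
    show "pi2 m n (mult_op \<xi>) (lp_norm (2 * real m / (real m + 1)) (multi_idx m n))
              \<le> ?A * linf_norm (multi_idx m n) \<xi>" by (rule up)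
  next
    show "sqrt (1 + (real n - 1) / real m)
            \<le> pi2 m n (mult_op (\<lambda>_. 1)) (lp_norm (2 * real m / (real m + 1)) (multi_idx m n))"
      unfolding eq by (rule nb(1))
  next
    show "pi2 m n (mult_op (\<lambda>_. 1)) (lp_norm (2 * real m / (real m + 1)) (multi_idx m n)) = ?A"
      by (rule eq)
  next
    show "?A \<le> 2 * sqrt (2 * exp 1) * sqrt (1 + (real n - 1) / real m)" by (rule nb(2))
  qed
qed

end
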